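(* For every integer $n\ge1$, let $G_n=H_1\vee H_2\vee\cdots\vee H_n$ be a simple complete multipartite graph where each $H_i$ is an independent set with $s_i>(n-1)^2$ vertices. Then for every prime power $q$, $\operatorname{mr}(\mathbb{F}_q,G_n)\le 3$ if and only if $q\ge n-1$.
   Context: $\vee$ denotes the join: the disjoint union together with all edges between vertices of different constituents. For a field $F$ and a simple graph $G$ on vertices $\{1,\dots,n\}$, $S(F,G)$ is the set of symmetric $n\times n$ matrices $A$ over $F$ with $a_{ij}\neq 0$ for $i\ne j$ iff $ij$ is an edge of $G$ (diagonal entries unrestricted), and $\operatorname{mr}(F,G)=\min\{\operatorname{rank}A: A\in S(F,G)\}$. *)

theory Defs
  imports "Jordan_Normal_Form.DL_Rank"
begin

text \<open>A simple graph on the vertex set {0..<N} is given by an edge predicate E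
  (assumed symmetric and irreflexive where relevant).\<close>

definition S_mat :: "nat \<Rightarrow> (nat \<Rightarrow> nat \<Rightarrow> bool) \<Rightarrow> 'a::field mat set" where
  "S_mat N E = {A. A \<in> carrier_mat N N \<and> transpose_mat A = A \<and>
     (\<forall>i<N. \<forall>j<N. i \<noteq> j \<longrightarrow> (A $$ (i, j) \<noteq> 0 \<longleftrightarrow> E i j))}"

definition mr :: "'a::field itself \<Rightarrow> nat \<Rightarrow> (nat \<Rightarrow> nat \<Rightarrow> bool) \<Rightarrow> nat" where
  "mr _ N E = Min {vec_space.rank N A | A. A \<in> (S_mat N E :: 'a mat set)}"

text \<open>Complete multipartite graph on {0..<N}: vertices u, v are adjacent iff they
  lie in different parts, where part v is the index of the part containing v.\<close>
definition multipartite_edge :: "(nat \<Rightarrow> nat) \<Rightarrow> nat \<Rightarrow> nat \<Rightarrow> bool" where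
  "multipartite_edge part u v \<longleftrightarrow> part u \<noteq> part v"

end

theory Submission
  imports Defs "Jordan_Normal_Form.DL_Rank_Submatrix"
begin


lemma det_mat_Suc:
  fixes f :: "nat \<Rightarrow> nat \<Rightarrow> 'a::comm_ring_1"
  shows "det (mat (Suc n) (Suc n) (\<lambda>(i,j). f i j)) =
    (\<Sum>i<Suc n. f i 0 * ((-1)^i * det (mat n n (\<lambda>(i',j'). f (if i'<i then i' else Suc i') (Suc j')))))"
proof -
  have "det (mat (Suc n) (Suc n) (\<lambda>(i,j). f i j)) = (\<Sum>i<Suc n. (mat (Suc n) (Suc n) (\<lambda>(i,j). f i j)) $$ (i,0) * cofactor (mat (Suc n) (Suc n) (\<lambda>(i,j). f i j)) i 0)"
    by (rule laplace_expansion_column) auto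
  also have "\<dots> = (\<Sum>i<Suc n. f i 0 * ((-1)^i * det (mat n n (\<lambda>(i',j'). f (if i'<i then i' else Suc i') (Suc j')))))"
  proof (rule sum.cong[OF refl])
    fix x assume x: "x \<in> {..<Suc n}"
    have e: "mat_delete (mat (Suc n) (Suc n) (\<lambda>(i,j). f i j)) x 0 = mat n n (\<lambda>(i',j'). f (if i'<x then i' else Suc i') (Suc j'))"
      unfolding mat_delete_def by (rule eq_matI) auto
    show "mat (Suc n) (Suc n) (\<lambda>(i,j). f i j) $$ (x,0) * cofactor (mat (Suc n) (Suc n) (\<lambda>(i,j). f i j)) x 0 = f x 0 * ((-1)^x * det (mat n n (\<lambda>(i',j'). f (if i'<x then i' else Suc i') (Suc j'))))"
      using x by (simp add: cofactor_def e)
  qed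
  finally show ?thesis .
qed

lemma det0: "det (mat 0 0 f) = 1" by (simp add: det_def)

lemma four: "(4::nat) = Suc(Suc(Suc(Suc 0)))" by simp
lemma det4: 
  fixes f :: "nat \<Rightarrow> nat \<Rightarrow> 'a::comm_ring_1"
  shows "det (mat 4 4 (\<lambda>(i,j). f i j)) = f 0 0*f 1 1*f 2 2*f 3 3 - f 0 0*f 1 1*f 2 3*f 3 2 - f 0 0*f 1 2*f 2 1*f 3 3 + f 0 0*f 1 2*f 2 3*f 3 1 + f 0 0*f 1 3*f 2 1*f 3 2 - f 0 0*f 1 3*f 2 2*f 3 1 - f 0 1*f 1 0*f 2 2*f 3 3 + f 0 1*f 1 0*f 2 3*f 3 2 + f 0 1*f 1 2*f 2 0*f 3 3 - f 0 1*f 1 2*f 2 3*f 3 0 - f 0 1*f 1 3*f 2 0*f 3 2 + f 0 1*f 1 3*f 2 2*f 3 0 + f 0 2*f 1 0*f 2 1*f 3 3 - f 0 2*f 1 0*f 2 3*f 3 1 - f 0 2*f 1 1*f 2 0*f 3 3 + f 0 2*f 1 1*f 2 3*f 3 0 + f 0 2*f 1 3*f 2 0*f 3 1 - f 0 2*f 1 3*f 2 1*f 3 0 - f 0 3*f 1 0*f 2 1*f 3 2 + f 0 3*f 1 0*f 2 2*f 3 1 + f 0 3*f 1 1*f 2 0*f 3 2 - f 0 3*f 1 1*f 2 2*f 3 0 - f 0 3*f 1 2*f 2 0*f 3 1 + f 0 3*f 1 2*f 2 1*f 3 0"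
  apply (subst (1 2) four)
  apply (simp only: det_mat_Suc det0 sum.lessThan_Suc sum.empty)
  apply (simp add: numeral_2_eq_2 numeral_3_eq_3 algebra_simps)
  done


lemma perm_of_inj:
  fixes f :: "nat \<Rightarrow> nat"
  assumes inj: "inj_on f {0..<k}"
  defines "I \<equiv> f ` {0..<k}"
  defines "p \<equiv> (\<lambda>i. if i < k then card {a \<in> I. a < f i} else i)"
  shows "p permutes {0..<k}" and "\<And>i. i < k \<Longrightarrow> pick I (p i) = f i"
proof -
  show pk: "\<And>i. i < k \<Longrightarrow> pick I (p i) = f i"
    unfolding p_def I_def by (simp add: pick_card_in_set)
  have cI: "card I = k" unfolding I_def using inj by (simp add: card_image)
  have sub: "p ` {0..<k} \<subseteq> {0..<k}"
  proof
    fix y assume "y \<in> p ` {0..<k}"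
    then obtain i where i: "i < k" "y = p i" by auto
    have "{a \<in> I. a < f i} \<subset> I" using i unfolding I_def by auto
    then have "card {a \<in> I. a < f i} < card I" by (rule psubset_card_mono[rotated]) (simp add: I_def)
    then show "y \<in> {0..<k}" using i cI unfolding p_def by simp
  qed
  have ij: "inj_on p {0..<k}"
  proof (rule inj_onI)
    fix i j assume "i \<in> {0..<k}" "j \<in> {0..<k}" "p i = p j"
    then have "f i = f j" using pk by (metis atLeastLessThan_iff)
    then show "i = j" using inj \<open>i \<in> {0..<k}\<close> \<open>j \<in> {0..<k}\<close> by (meson inj_onD)
  qed
  have "p ` {0..<k} = {0..<k}" using endo_inj_surj[OF _ sub ij] by simp
  then have "bij_betw p {0..<k} {0..<k}" using ij by (simp add: bij_betw_def)
  then show "p permutes {0..<k}" by (rule bij_imp_permutes) (simp add: p_def)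
qed

lemma minor4_zero:
  fixes A :: "'a::field mat"
  assumes A: "A \<in> carrier_mat N N" and r: "vec_space.rank N A \<le> 3"
  and f: "\<forall>i<4. f i < N" and g: "\<forall>i<4. g i < N"
  shows "det (mat 4 4 (\<lambda>(i,j). A $$ (f i, g j))) = 0"
proof (cases "inj_on f {0..<4} \<and> inj_on g {0..<4}")
  case False
  then consider "\<not> inj_on f {0..<4}" | "\<not> inj_on g {0..<4}" by blast
  then show ?thesis
  proof cases
    assume "\<not> inj_on f {0..<4}"
    then obtain i j where ij: "i < 4" "j < 4" "i \<noteq> j" "f i = f j" unfolding inj_on_def by auto
    have "row (mat 4 4 (\<lambda>(i,j). A $$ (f i, g j))) i = row (mat 4 4 (\<lambda>(i,j). A $$ (f i, g j))) j"
      using ij by (auto intro!: eq_vecI)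
    then show ?thesis using det_identical_rows[of "mat 4 4 (\<lambda>(i,j). A $$ (f i, g j))" 4 i j] ij by auto
  next
    assume "\<not> inj_on g {0..<4}"
    then obtain i j where ij: "i < 4" "j < 4" "i \<noteq> j" "g i = g j" unfolding inj_on_def by auto
    have "col (mat 4 4 (\<lambda>(i,j). A $$ (f i, g j))) i = col (mat 4 4 (\<lambda>(i,j). A $$ (f i, g j))) j"
      using ij by (auto intro!: eq_vecI)
    then show ?thesis using det_identical_cols[of "mat 4 4 (\<lambda>(i,j). A $$ (f i, g j))" 4 i j] ij by auto
  qed
next
  case True
  define I where "I = f ` {0..<4}"
  define J where "J = g ` {0..<4}"
  define p where "p = (\<lambda>i. if i < 4 then card {a \<in> I. a < f i} else i)"
  define q where "q = (\<lambda>i. if i < 4 then card {a \<in> J. a < g i} else i)"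
  have pp: "p permutes {0..<4}" "\<And>i. i < 4 \<Longrightarrow> pick I (p i) = f i"
    using perm_of_inj[of f 4] True unfolding p_def I_def by auto
  have qp: "q permutes {0..<4}" "\<And>i. i < 4 \<Longrightarrow> pick J (q i) = g i"
    using perm_of_inj[of g 4] True unfolding q_def J_def by auto
  have cI: "{i. i < dim_row A \<and> i \<in> I} = I" using f A unfolding I_def by auto
  have cJ: "{i. i < dim_col A \<and> i \<in> J} = J" using g A unfolding J_def by auto
  have cardI: "card I = 4" unfolding I_def using True by (simp add: card_image)
  have cardJ: "card J = 4" unfolding J_def using True by (simp add: card_image)
  define S where "S = submatrix A I J"
  have S: "S \<in> carrier_mat 4 4"
    by (rule carrier_matI) (simp_all only: S_def dim_submatrix cI cJ cardI cardJ)
  have p4: "\<And>i. i < 4 \<Longrightarrow> p i < 4" using pp(1) by (simp add: permutes_in_image)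
  have q4: "\<And>i. i < 4 \<Longrightarrow> q i < 4" using qp(1) by (simp add: permutes_in_image)
  define C where "C = mat 4 4 (\<lambda>(i,j). S $$ (i, q j))"
  have B: "mat 4 4 (\<lambda>(i,j). A $$ (f i, g j)) = mat 4 4 (\<lambda>(i,j). C $$ (p i, j))"
  proof (rule eq_matI, simp_all)
    fix i j :: nat assume ij: "i < 4" "j < 4"
    have "S $$ (p i, q j) = A $$ (pick I (p i), pick J (q j))"
      unfolding S_def by (rule submatrix_index) (use cI cJ cardI cardJ p4 q4 ij in auto)
    then show "A $$ (f i, g j) = C $$ (p i, j)" using ij p4 q4 pp qp by (simp add: C_def)
  qed
  have C: "C \<in> carrier_mat 4 4" unfolding C_def by simp
  have "det (mat 4 4 (\<lambda>(i,j). C $$ (p i, j))) = signof p * det C"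
    by (rule det_permute_rows[OF C pp(1)])
  moreover have "det C = signof q * det S"
  proof -
    have "det C = det (transpose_mat C)" using det_transpose[OF C] by simp
    also have "transpose_mat C = mat 4 4 (\<lambda>(i,j). (transpose_mat S) $$ (q i, j))"
      by (rule eq_matI) (use S q4 in \<open>auto simp: C_def\<close>)
    also have "det \<dots> = signof q * det (transpose_mat S)"
      by (rule det_permute_rows[OF _ qp(1)]) (use S in auto)
    finally show ?thesis using det_transpose[OF S] by simp
  qed
  moreover have "det S = 0"
  proof (rule ccontr)
    assume "det S \<noteq> 0"
    then have "card {j. j < N \<and> j \<in> J} \<le> vec_space.rank N A"
      using vec_space.rank_gt_minor[OF A] unfolding S_def by blast
    moreover have "{j. j < N \<and> j \<in> J} = J" using cJ A by auto
    ultimately show False using r cardJ by simp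
  qed
  ultimately show ?thesis using B by simp
qed


definition sel :: "nat \<Rightarrow> nat \<Rightarrow> nat \<Rightarrow> nat \<Rightarrow> nat \<Rightarrow> nat" where
  "sel a0 a1 a2 a3 i = (if i = 0 then a0 else if i = 1 then a1 else if i = 2 then a2 else a3)"

lemma sel_simps[simp]: "sel a0 a1 a2 a3 0 = a0" "sel a0 a1 a2 a3 1 = a1" "sel a0 a1 a2 a3 2 = a2" "sel a0 a1 a2 a3 3 = a3" "sel a0 a1 a2 a3 (Suc 0) = a1"
  by (simp_all add: sel_def)

lemma det4_sel:
  fixes M :: "nat \<Rightarrow> nat \<Rightarrow> 'a::comm_ring_1"
  shows "det (mat 4 4 (\<lambda>(i,j). M (sel r0 r1 r2 r3 i) (sel c0 c1 c2 c3 j))) =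
   M r0 c0*M r1 c1*M r2 c2*M r3 c3 - M r0 c0*M r1 c1*M r2 c3*M r3 c2 - M r0 c0*M r1 c2*M r2 c1*M r3 c3 + M r0 c0*M r1 c2*M r2 c3*M r3 c1 + M r0 c0*M r1 c3*M r2 c1*M r3 c2 - M r0 c0*M r1 c3*M r2 c2*M r3 c1
 - M r0 c1*M r1 c0*M r2 c2*M r3 c3 + M r0 c1*M r1 c0*M r2 c3*M r3 c2 + M r0 c1*M r1 c2*M r2 c0*M r3 c3 - M r0 c1*M r1 c2*M r2 c3*M r3 c0 - M r0 c1*M r1 c3*M r2 c0*M r3 c2 + M r0 c1*M r1 c3*M r2 c2*M r3 c0
 + M r0 c2*M r1 c0*M r2 c1*M r3 c3 - M r0 c2*M r1 c0*M r2 c3*M r3 c1 - M r0 c2*M r1 c1*M r2 c0*M r3 c3 + M r0 c2*M r1 c1*M r2 c3*M r3 c0 + M r0 c2*M r1 c3*M r2 c0*M r3 c1 - M r0 c2*M r1 c3*M r2 c1*M r3 c0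
 - M r0 c3*M r1 c0*M r2 c1*M r3 c2 + M r0 c3*M r1 c0*M r2 c2*M r3 c1 + M r0 c3*M r1 c1*M r2 c0*M r3 c2 - M r0 c3*M r1 c1*M r2 c2*M r3 c0 - M r0 c3*M r1 c2*M r2 c0*M r3 c1 + M r0 c3*M r1 c2*M r2 c1*M r3 c0"
  by (simp add: det4)

lemma conic_inj:
  fixes a b d x y x' y' :: "'a::field"
  assumes two: "(2::'a) \<noteq> 0" and d: "d \<noteq> 0" and a: "a \<noteq> 0" and b: "b \<noteq> 0"
  and c1: "(a*y+b*x-d)^2 = 4*a*b*x*y" and c2: "(a*y'+b*x'-d)^2 = 4*a*b*x'*y'"
  and w: "b*x - a*y = b*x' - a*y'"
  shows "x = x' \<and> y = y'"
proof -
  have u1: "2*d*(b*x+a*y) = d^2 + (b*x-a*y)^2" using c1 by (simp add: algebra_simps power2_eq_square) 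
  have u2: "2*d*(b*x'+a*y') = d^2 + (b*x'-a*y')^2" using c2 by (simp add: algebra_simps power2_eq_square)
  have "2*d*(b*x+a*y) = 2*d*(b*x'+a*y')" using u1 u2 w by simp
  then have u: "b*x+a*y = b*x'+a*y'" using two d by simp
  have e1: "2*(b*x) = (b*x+a*y) + (b*x - a*y)" "2*(b*x') = (b*x'+a*y') + (b*x' - a*y')"
    "2*(a*y) = (b*x+a*y) - (b*x - a*y)" "2*(a*y') = (b*x'+a*y') - (b*x' - a*y')" by (simp_all add: algebra_simps)
  have "2*(b*x) = 2*(b*x')" by (subst e1(1), subst e1(2), simp only: u w)
  then have "x = x'" using two b by simp
  moreover have "2*(a*y) = 2*(a*y')" by (subst e1(3), subst e1(4), simp only: u w)
  then have "y = y'" using two a by simp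
  ultimately show ?thesis by simp
qed



lemma core:
  fixes M :: "nat \<Rightarrow> nat \<Rightarrow> 'a::{finite,field}"
  assumes n4: "n \<ge> 4"
  and sym: "\<And>i j. i<n \<Longrightarrow> j<n \<Longrightarrow> M i j = M j i"
  and diag: "\<And>i. i<n \<Longrightarrow> M i i = 0"
  and off: "\<And>i j. i<n \<Longrightarrow> j<n \<Longrightarrow> i\<noteq>j \<Longrightarrow> M i j \<noteq> 0"
  and D: "\<And>r0 r1 r2 r3 c0 c1 c2 c3. r0<n \<Longrightarrow> r1<n \<Longrightarrow> r2<n \<Longrightarrow> r3<n \<Longrightarrow> c0<n \<Longrightarrow> c1<n \<Longrightarrow> c2<n \<Longrightarrow> c3<n \<Longrightarrow>
      det (mat 4 4 (\<lambda>(i,j). M (sel r0 r1 r2 r3 i) (sel c0 c1 c2 c3 j))) = 0"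
  shows "n \<le> card (UNIV::'a set) + 1"
proof -
  define a where "a = M 0 1"
  define b where "b = M 0 2"
  define d where "d = M 1 2"
  define c where "c = (\<lambda>k. M 0 k)"
  define e where "e = (\<lambda>k. M 1 k)"
  define f where "f = (\<lambda>k. M 2 k)"
  define x where "x = (\<lambda>k. e k / c k)"
  define y where "y = (\<lambda>k. f k / c k)"
  have a0: "a \<noteq> 0" and b0: "b \<noteq> 0" and d0: "d \<noteq> 0" unfolding a_def b_def d_def using off n4 by auto
  have Msimp: "M 0 0 = 0" "M 1 1 = 0" "M 2 2 = 0" "M 0 1 = a" "M 1 0 = a" "M 0 2 = b" "M 2 0 = b"
     "M 1 2 = d" "M 2 1 = d" using diag sym n4 by (auto simp: a_def b_def d_def)
  have Mk: "\<And>k. k < n \<Longrightarrow> M 0 k = c k \<and> M k 0 = c k \<and> M 1 k = e k \<and> M k 1 = e k \<and> M 2 k = f k \<and> M k 2 = f k \<and> M k k = 0"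
    using diag sym n4 by (auto simp: c_def e_def f_def)
  have nz: "\<And>k. 3 \<le> k \<Longrightarrow> k < n \<Longrightarrow> c k \<noteq> 0 \<and> e k \<noteq> 0 \<and> f k \<noteq> 0"
    using off n4 by (auto simp: c_def e_def f_def)
  have ex: "\<And>k. 3 \<le> k \<Longrightarrow> k < n \<Longrightarrow> e k = x k * c k \<and> f k = y k * c k"
    using nz by (simp add: x_def y_def)
  have xy0: "\<And>k. 3 \<le> k \<Longrightarrow> k < n \<Longrightarrow> x k \<noteq> 0 \<and> y k \<noteq> 0"
    using nz by (simp add: x_def y_def)
  have P: "(a * f k + b * e k - c k * d)^2 = 4*a*b*e k*f k" if k: "3 \<le> k" "k < n" for k
  proof -
    have "det (mat 4 4 (\<lambda>(i,j). M (sel 0 1 2 k i) (sel 0 1 2 k j))) = 0" using D k n4 by simp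
    then have "(a * f k + b * e k - c k * d)^2 - 4*a*b*e k*f k = 0"
      unfolding det4_sel using Msimp Mk[OF k(2)] by (simp add: algebra_simps power2_eq_square)
    then show ?thesis by simp
  qed
  have conic: "(a*y k+b*x k-d)^2 = 4*a*b*x k*y k" if k: "3 \<le> k" "k < n" for k
  proof -
    have "(c k)^2 * ((a*y k+b*x k-d)^2 - 4*a*b*x k*y k) = 0"
      using P[OF k] ex[OF k] by (simp add: algebra_simps power2_eq_square)
    then show ?thesis using nz[OF k] by simp
  qed
  have inj: "k = l" if k: "3 \<le> k" "k < n" and l: "3 \<le> l" "l < n" and xe: "x k = x l" and ye: "y k = y l" for k l
  proof (rule ccontr)
    assume kl: "k \<noteq> l"
    define m where "m = M k l"
    have m0: "m \<noteq> 0" and mlk: "M l k = m" using off sym k l kl by (auto simp: m_def)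
    have Dm: "det (mat 4 4 (\<lambda>(i,j). M (sel 0 1 2 k i) (sel 0 1 2 l j))) = 0" using D k l n4 by simp
    have E: "c l * det (mat 4 4 (\<lambda>(i,j). M (sel 0 1 2 k i) (sel 0 1 2 l j))) =
       c k * ((a * f l + b * e l - c l * d)^2 - 4*a*b*e l*f l) + 2*a*b*d*m*c l"
      unfolding det4_sel using Msimp Mk[OF k(2)] Mk[OF l(2)] ex[OF k] ex[OF l] xe ye
      by (simp add: m_def algebra_simps power2_eq_square)
    have "2*a*b*d*m*c l = 0" using E Dm P[OF l] by auto
    then have two: "(2::'a) = 0" using a0 b0 d0 m0 nz[OF l] by simp
    have Dp: "det (mat 4 4 (\<lambda>(i,j). M (sel 0 1 k l i) (sel 0 1 k l j))) = 0" using D k l n4 by simp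
    have E2: "det (mat 4 4 (\<lambda>(i,j). M (sel 0 1 k l i) (sel 0 1 k l j))) = (a*m + c k * e l - c l * e k)^2 - 4*a*c k*e l*m"
      unfolding det4_sel using Msimp Mk[OF k(2)] Mk[OF l(2)] mlk
      by (simp add: m_def algebra_simps power2_eq_square)
    have "c k * e l - c l * e k = 0" using ex[OF k] ex[OF l] xe by (simp add: algebra_simps)
    moreover have "(4::'a) = 2 * 2" by simp
    ultimately have "(a*m)^2 = 0" using E2 Dp two by (simp add: algebra_simps)
    then show False using a0 m0 by simp
  qed
  have fin: "\<And>(\<phi>::nat \<Rightarrow> 'a) z1 z2. z1 \<noteq> z2 \<Longrightarrow> (\<And>k. 3 \<le> k \<Longrightarrow> k < n \<Longrightarrow> \<phi> k \<noteq> z1 \<and> \<phi> k \<noteq> z2)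
     \<Longrightarrow> (\<And>k l. 3 \<le> k \<Longrightarrow> k < n \<Longrightarrow> 3 \<le> l \<Longrightarrow> l < n \<Longrightarrow> \<phi> k = \<phi> l \<Longrightarrow> k = l) \<Longrightarrow> n \<le> card (UNIV::'a set) + 1"
  proof -
    fix \<phi> :: "nat \<Rightarrow> 'a" and z1 z2 
    assume z: "z1 \<noteq> z2" and im: "\<And>k. 3 \<le> k \<Longrightarrow> k < n \<Longrightarrow> \<phi> k \<noteq> z1 \<and> \<phi> k \<noteq> z2"
      and ij: "\<And>k l. 3 \<le> k \<Longrightarrow> k < n \<Longrightarrow> 3 \<le> l \<Longrightarrow> l < n \<Longrightarrow> \<phi> k = \<phi> l \<Longrightarrow> k = l"
    have i1: "inj_on \<phi> {3..<n}"
    proof (rule inj_onI)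
      fix k l assume "k \<in> {3..<n}" "l \<in> {3..<n}" "\<phi> k = \<phi> l"
      then show "k = l" using ij by auto
    qed
    have i2: "\<phi> ` {3..<n} \<subseteq> UNIV - {z1, z2}"
    proof
      fix w assume "w \<in> \<phi> ` {3..<n}"
      then obtain k where "k \<in> {3..<n}" "w = \<phi> k" by auto
      then show "w \<in> UNIV - {z1, z2}" using im[of k] by auto
    qed
    have "card {3..<n} \<le> card (UNIV - {z1, z2})"
      by (rule card_inj_on_le[OF i1 i2]) simp
    also have "\<dots> = card (UNIV::'a set) - 2" using z by (simp add: card_Diff_subset)
    finally show "n \<le> card (UNIV::'a set) + 1" using n4 by simp
  qed
  show ?thesis
  proof (cases "(2::'a) = 0")
    case False
    have "(4::'a) = 2*2" by simp
    then have four: "(4::'a) \<noteq> 0" using False by (simp only: mult_eq_0_iff) simp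
    show ?thesis
    proof (rule fin[of 0 1 "\<lambda>k. (b*x k - a*y k + d)/(2*d)"])
      fix k assume k: "3 \<le> k" "k < n"
      have n1: "b*x k - a*y k + d \<noteq> 0"
      proof
        assume h: "b*x k - a*y k + d = 0"
        then have "a * y k = b * x k + d" by (simp add: algebra_simps)
        then have "4*b*x k*d = 0" using conic[OF k] by (auto simp: algebra_simps power2_eq_square)
        then show False using four b0 d0 xy0[OF k] by simp
      qed
      have n2: "b*x k - a*y k + d \<noteq> 2*d"
      proof
        assume h: "b*x k - a*y k + d = 2*d"
        then have "b * x k = a * y k + d" by (simp add: algebra_simps)
        then have "4*a*y k*d = 0" using conic[OF k] by (auto simp: algebra_simps power2_eq_square)
        then show False using four a0 d0 xy0[OF k] by simp
      qed
      show "(b*x k - a*y k + d)/(2*d) \<noteq> 0 \<and> (b*x k - a*y k + d)/(2*d) \<noteq> 1"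
        using n1 n2 False d0 by simp
    next
      fix k l assume k: "3 \<le> k" "k < n" and l: "3 \<le> l" "l < n"
        and eq: "(b*x k - a*y k + d)/(2*d) = (b*x l - a*y l + d)/(2*d)"
      have "b*x k - a*y k = b*x l - a*y l" using eq False d0 by simp
      then have "x k = x l \<and> y k = y l" using conic_inj[OF False d0 a0 b0 conic[OF k] conic[OF l]] by simp
      then show "k = l" using inj k l by blast
    qed simp
  next
    case True
    have "(4::'a) = 2*2" by simp
    then have four: "(4::'a) = 0" using True by simp
    have lin: "a*y k + b*x k = d" if k: "3 \<le> k" "k < n" for k
      using conic[OF k] four by simp
    show ?thesis
    proof (rule fin[of 0 "d/b" x])
      show "0 \<noteq> d/b" using d0 b0 by simp
    next
      fix k assume k: "3 \<le> k" "k < n"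
      have "x k \<noteq> d/b"
      proof
        assume "x k = d/b"
        then have "b * x k = d" using b0 by simp
        then have "a * y k = 0" using lin[OF k] by simp
        then show False using a0 xy0[OF k] by simp
      qed
      then show "x k \<noteq> 0 \<and> x k \<noteq> d/b" using xy0[OF k] by simp
    next
      fix k l assume k: "3 \<le> k" "k < n" and l: "3 \<le> l" "l < n" and eq: "x k = x l"
      have "a * y k = a * y l" using lin[OF k] lin[OF l] eq by (metis add_right_cancel)
      then have "y k = y l" using a0 by simp
      then show "k = l" using inj k l eq by blast
    qed
  qed
qed


lemma mr_set_finite:
  "finite {vec_space.rank N A | A. A \<in> (S_mat N E :: 'a::field mat set)}"
proof (rule finite_subset[of _ "{..N}"])
  show "{vec_space.rank N A | A. A \<in> (S_mat N E :: 'a::field mat set)} \<subseteq> {..N}"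
  proof
    fix r assume "r \<in> {vec_space.rank N A | A. A \<in> (S_mat N E :: 'a::field mat set)}"
    then obtain A :: "'a mat" where "r = vec_space.rank N A" "A \<in> carrier_mat N N" unfolding S_mat_def by blast
    then show "r \<in> {..N}" using vec_space.rank_le_nc[of A N N] by simp
  qed
qed simp

definition hA :: "'a::field option \<Rightarrow> 'a" where "hA o1 = (case o1 of None \<Rightarrow> 0 | Some t \<Rightarrow> 1)"
definition hB :: "'a::field option \<Rightarrow> 'a" where "hB o1 = (case o1 of None \<Rightarrow> 0 | Some t \<Rightarrow> t)"
definition hG :: "'a::field option \<Rightarrow> 'a" where "hG o1 = (case o1 of None \<Rightarrow> 1 | Some t \<Rightarrow> t*t)"

lemma h_zero: "(hA o1 * hG o2 + hG o1 * hA o2 - 2 * hB o1 * hB o2 = (0::'a::field)) \<longleftrightarrow> o1 = o2"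
proof (cases o1; cases o2)
  fix s t assume "o1 = Some s" "o2 = Some t"
  moreover have "1 * (t*t) + s*s*1 - 2*s*t = (s - t)^2" by (simp add: algebra_simps power2_eq_square)
  ultimately show ?thesis by (simp add: hA_def hB_def hG_def)
qed (simp_all add: hA_def hB_def hG_def)

lemma card_option_UNIV: "card (UNIV::'a::finite option set) = card (UNIV::'a set) + 1"
proof -
  have "card (UNIV::'a option set) = card (insert None (range (Some::'a \<Rightarrow> 'a option)))"
    by (metis UNIV_option_conv)
  also have "\<dots> = Suc (card (range (Some::'a \<Rightarrow> 'a option)))" by (rule card_insert_disjoint) auto
  also have "card (range (Some::'a \<Rightarrow> 'a option)) = card (UNIV::'a set)" by (simp add: card_image)
  finally show ?thesis by simp
qed

lemma construction:
  fixes part :: "nat \<Rightarrow> nat"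
  assumes parts: "\<forall>v<N. part v < n" and q: "card (UNIV :: 'a::{finite,field} set) \<ge> n - 1"
  shows "\<exists>A \<in> (S_mat N (multipartite_edge part) :: 'a mat set). vec_space.rank N A \<le> 3"
proof -
  have "card {0..<n} \<le> card (UNIV::'a option set)" using q card_option_UNIV[where 'a='a] by simp
  then obtain tau :: "nat \<Rightarrow> 'a option" where tau: "inj_on tau {0..<n}"
    using card_le_inj[of "{0..<n}" "UNIV::'a option set"] by auto
  define al where "al = (\<lambda>v. hA (tau (part v)) :: 'a)"
  define be where "be = (\<lambda>v. hB (tau (part v)) :: 'a)"
  define ga where "ga = (\<lambda>v. hG (tau (part v)) :: 'a)"
  define A1 where "A1 = mat N N (\<lambda>(u,v). al u * ga v)"
  define A2 where "A2 = mat N N (\<lambda>(u,v). ga u * al v)"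
  define A3 where "A3 = mat N N (\<lambda>(u,v). (- 2 * be u) * be v)"
  define A where "A = A1 + A2 + A3"
  have car: "A1 \<in> carrier_mat N N" "A2 \<in> carrier_mat N N" "A3 \<in> carrier_mat N N"
    unfolding A1_def A2_def A3_def by auto
  have r1: "vec_space.rank N A1 \<le> 1" "vec_space.rank N A2 \<le> 1" "vec_space.rank N A3 \<le> 1"
    by (rule vec_space.rank_le_1_product_entries[OF car(1)], simp add: A1_def)
       (rule vec_space.rank_le_1_product_entries[OF car(2)], simp add: A2_def,
        rule vec_space.rank_le_1_product_entries[OF car(3), of "\<lambda>u. - 2 * be u" be], simp add: A3_def)
  have "vec_space.rank N (A1 + A2) \<le> 2"
    using vec_space.rank_subadditive[OF car(1) car(2)] r1 by simp
  moreover have car12: "A1 + A2 \<in> carrier_mat N N" using car by simp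
  ultimately have rA: "vec_space.rank N A \<le> 3"
    using vec_space.rank_subadditive[OF car12 car(3)] r1 unfolding A_def by simp
  have Aent: "\<And>u v. u < N \<Longrightarrow> v < N \<Longrightarrow> A $$ (u,v) = hA (tau (part u)) * hG (tau (part v)) + hG (tau (part u)) * hA (tau (part v)) - 2 * hB (tau (part u)) * hB (tau (part v))"
    unfolding A_def A1_def A2_def A3_def al_def be_def ga_def by simp
  have AC: "A \<in> carrier_mat N N" unfolding A_def using car by simp
  have "A \<in> S_mat N (multipartite_edge part)"
    unfolding S_mat_def
  proof (intro CollectI conjI allI impI)
    show "A \<in> carrier_mat N N" by (rule AC)
    show "transpose_mat A = A"
      by (rule eq_matI) (use AC in \<open>auto simp: Aent algebra_simps\<close>)
    fix i j assume ij: "i < N" "j < N" "i \<noteq> j"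
    have "A $$ (i,j) \<noteq> 0 \<longleftrightarrow> tau (part i) \<noteq> tau (part j)" using h_zero ij Aent by simp
    also have "\<dots> \<longleftrightarrow> part i \<noteq> part j" using tau parts ij by (auto dest: inj_onD)
    finally show "A $$ (i,j) \<noteq> 0 \<longleftrightarrow> multipartite_edge part i j" by (simp add: multipartite_edge_def)
  qed
  then show ?thesis using rA by blast
qed



lemma zero_diag_exists:
  fixes A :: "'a::field mat"
  assumes AS: "A \<in> S_mat N (multipartite_edge part)" and r: "vec_space.rank N A \<le> 3"
  and c: "card {v. v < N \<and> part v = i} \<ge> 4"
  shows "\<exists>v<N. part v = i \<and> A $$ (v,v) = 0"
proof (rule ccontr)
  assume nex: "\<not> (\<exists>v<N. part v = i \<and> A $$ (v,v) = 0)"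
  define P where "P = {v. v < N \<and> part v = i}"
  have "card {0..<(4::nat)} \<le> card P" using c by (simp add: P_def)
  moreover have "finite P" unfolding P_def by simp
  ultimately obtain h :: "nat \<Rightarrow> nat" where h: "h ` {0..<4} \<subseteq> P" "inj_on h {0..<4}"
    using card_le_inj[of "{0..<4::nat}" P] by auto
  have AC: "A \<in> carrier_mat N N" and sym: "transpose_mat A = A"
    and offd: "\<And>i j. i<N \<Longrightarrow> j<N \<Longrightarrow> i \<noteq> j \<Longrightarrow> (A $$ (i, j) \<noteq> 0 \<longleftrightarrow> multipartite_edge part i j)"
    using AS unfolding S_mat_def by auto
  have hP: "\<And>a. a < 4 \<Longrightarrow> h a < N \<and> part (h a) = i"
  proof -
    fix a :: nat assume "a < 4"
    then have "h a \<in> P" using h(1) by auto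
    then show "h a < N \<and> part (h a) = i" unfolding P_def by simp
  qed
  have z: "\<And>a b. a < 4 \<Longrightarrow> b < 4 \<Longrightarrow> a \<noteq> b \<Longrightarrow> A $$ (h a, h b) = 0"
  proof -
    fix a b :: nat assume ab: "a < 4" "b < 4" "a \<noteq> b"
    then have "h a \<noteq> h b" using h(2) by (auto dest: inj_onD)
    then show "A $$ (h a, h b) = 0" using offd[of "h a" "h b"] hP[OF ab(1)] hP[OF ab(2)]
      by (auto simp: multipartite_edge_def)
  qed
  have nz: "\<And>a. a < 4 \<Longrightarrow> A $$ (h a, h a) \<noteq> 0" using hP nex by blast
  have "det (mat 4 4 (\<lambda>(a,b). A $$ (h a, h b))) = 0"
    by (rule minor4_zero[OF AC r]) (use hP in auto)
  moreover have "det (mat 4 4 (\<lambda>(a,b). A $$ (h a, h b))) = A $$ (h 0, h 0) * A $$ (h 1, h 1) * A $$ (h 2, h 2) * A $$ (h 3, h 3)"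
    by (simp add: det4 z)
  ultimately show False using nz[of 0] nz[of 1] nz[of 2] nz[of 3] by simp
qed

theorem mainTheorem19:
  fixes n N :: nat and part :: "nat \<Rightarrow> nat"
  assumes "n \<ge> 1"
    and "\<forall>v<N. part v < n"
    and "\<forall>i<n. card {v. v < N \<and> part v = i} > (n - 1)^2"
  shows "mr TYPE('a::{finite,field}) N (multipartite_edge part) \<le> 3
         \<longleftrightarrow> card (UNIV :: 'a set) \<ge> n - 1"
proof -
  note parts = assms(2) and big = assms(3)
  let ?E = "multipartite_edge part"
  let ?R = "{vec_space.rank N A | A. A \<in> (S_mat N ?E :: 'a mat set)}"
  have mr_eq: "mr TYPE('a) N ?E = Min ?R" by (simp add: mr_def)
  show ?thesis
  proof
    assume mr3: "mr TYPE('a) N ?E \<le> 3"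
    define A0 where "A0 = (mat N N (\<lambda>(u,v). if part u \<noteq> part v then 1 else 0) :: 'a mat)"
    have "A0 \<in> S_mat N ?E" unfolding S_mat_def
    proof (intro CollectI conjI allI impI)
      show "A0 \<in> carrier_mat N N" unfolding A0_def by simp
      show "transpose_mat A0 = A0" unfolding A0_def by (rule eq_matI) auto
    qed (simp add: A0_def multipartite_edge_def)
    then have "?R \<noteq> {}" by blast
    then have "Min ?R \<in> ?R" using mr_set_finite by (rule Min_in[rotated])
    then obtain A :: "'a mat" where AS: "A \<in> S_mat N ?E" and rA: "vec_space.rank N A \<le> 3"
      using mr3 mr_eq by auto
    have card2: "card (UNIV::'a set) \<ge> 2"
    proof -
      have "card {0::'a, 1} \<le> card (UNIV::'a set)" by (rule card_mono) auto
      then show ?thesis by simp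
    qed
    show "card (UNIV :: 'a set) \<ge> n - 1"
    proof (cases "n \<le> 3")
      case True then show ?thesis using card2 by simp
    next
      case False
      then have n4: "n \<ge> 4" by simp
      have "(3::nat)^2 \<le> (n-1)^2" using n4 by (intro power_mono) auto
      then have c4: "\<And>i. i < n \<Longrightarrow> card {v. v < N \<and> part v = i} \<ge> 4" using big by force
      have AC: "A \<in> carrier_mat N N" and symA: "transpose_mat A = A"
        and offd: "\<And>i j. i<N \<Longrightarrow> j<N \<Longrightarrow> i \<noteq> j \<Longrightarrow> (A $$ (i, j) \<noteq> 0 \<longleftrightarrow> ?E i j)"
        using AS unfolding S_mat_def by auto
      have symA': "\<And>u v. u < N \<Longrightarrow> v < N \<Longrightarrow> A $$ (u,v) = A $$ (v,u)"
      proof -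
        fix u v assume uv: "u < N" "v < N"
        have "transpose_mat A $$ (v,u) = A $$ (u,v)" using uv AC by simp
        then show "A $$ (u,v) = A $$ (v,u)" using symA by simp
      qed
      define w where "w = (\<lambda>i. SOME v. v < N \<and> part v = i \<and> A $$ (v,v) = 0)"
      have wP: "\<And>i. i < n \<Longrightarrow> w i < N \<and> part (w i) = i \<and> A $$ (w i, w i) = 0"
      proof -
        fix i assume i: "i < n"
        have "\<exists>v. v < N \<and> part v = i \<and> A $$ (v,v) = 0"
          using zero_diag_exists[OF AS rA c4[OF i]] by blast
        then show "w i < N \<and> part (w i) = i \<and> A $$ (w i, w i) = 0"
          unfolding w_def by (rule someI_ex)
      qed
      define M where "M = (\<lambda>i j. A $$ (w i, w j))"
      have selin: "\<And>r0 r1 r2 r3 i. sel r0 r1 r2 r3 i \<in> {r0,r1,r2,r3}" by (simp add: sel_def)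
      show ?thesis
      proof -
        have "n \<le> card (UNIV::'a set) + 1"
        proof (rule core[of n M])
          show "4 \<le> n" by (rule n4)
          show "\<And>i j. i < n \<Longrightarrow> j < n \<Longrightarrow> M i j = M j i" unfolding M_def using wP symA' by simp
          show "\<And>i. i < n \<Longrightarrow> M i i = 0" unfolding M_def using wP by simp
          show "\<And>i j. i < n \<Longrightarrow> j < n \<Longrightarrow> i \<noteq> j \<Longrightarrow> M i j \<noteq> 0"
          proof -
            fix i j assume ij: "i < n" "j < n" "i \<noteq> j"
            then have "w i \<noteq> w j" using wP by metis
            then show "M i j \<noteq> 0" unfolding M_def using offd[of "w i" "w j"] wP[OF ij(1)] wP[OF ij(2)] ij
              by (simp add: multipartite_edge_def)
          qed
          fix r0 r1 r2 r3 c0 c1 c2 c3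
          assume rs: "r0 < n" "r1 < n" "r2 < n" "r3 < n" "c0 < n" "c1 < n" "c2 < n" "c3 < n"
          have f: "\<forall>i<4. w (sel r0 r1 r2 r3 i) < N"
          proof (intro allI impI)
            fix i :: nat
            have "sel r0 r1 r2 r3 i < n" using selin[of r0 r1 r2 r3 i] rs by auto
            then show "w (sel r0 r1 r2 r3 i) < N" using wP by blast
          qed
          have g: "\<forall>i<4. w (sel c0 c1 c2 c3 i) < N"
          proof (intro allI impI)
            fix i :: nat
            have "sel c0 c1 c2 c3 i < n" using selin[of c0 c1 c2 c3 i] rs by auto
            then show "w (sel c0 c1 c2 c3 i) < N" using wP by blast
          qed
          show "det (mat 4 4 (\<lambda>(i,j). M (sel r0 r1 r2 r3 i) (sel c0 c1 c2 c3 j))) = 0"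
            unfolding M_def using minor4_zero[OF AC rA f g] by simp
        qed
        then show ?thesis by simp
      qed
    qed
  next
    assume q: "card (UNIV :: 'a set) \<ge> n - 1"
    obtain A where AS: "A \<in> (S_mat N ?E :: 'a mat set)" and rA: "vec_space.rank N A \<le> 3"
      using construction[OF parts q] by blast
    have "Min ?R \<le> vec_space.rank N A" using mr_set_finite AS by (intro Min_le) auto
    then show "mr TYPE('a) N ?E \<le> 3" using mr_eq rA by simp
  qed
qed


end
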